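(* Let $A = A_s + A_i\epsilon\in\mathbb{DR}^{m\times n}$ with $m\ge n$ and $A_s$ of full column rank. Let $A_s = Q_sR_s$ be the thin QR decomposition of $A_s$, with $Q_s\in\mathbb{R}^{m\times n}$ having orthonormal columns and $R_s=(r_{s_{ij}})\in\mathbb{R}^{n\times n}$ upper triangular with positive diagonal entries. Put $B = Q_s^{\top}A_i = [b_1,\dots,b_n]$ ($b_j\in\mathbb{R}^n$). Define $P = [p_1,\dots,p_n]\in\mathbb{R}^{n\times n}$ with zero diagonal, strictly lower triangular part given by $$p_1(2{:}n) = b_1(2{:}n)/r_{s_{11}},\qquad p_k(k{+}1{:}n) = \Big(b_k(k{+}1{:}n) - \sum_{t=1}^{k-1} r_{s_{tk}}\,p_t(k{+}1{:}n)\Big)\Big/r_{s_{kk}},\quad k=2,\dots,n-1,$$ and $P^{\top} = -P$. Set $$Q_i = (I_m - Q_sQ_s^{\top})A_iR_s^{-1} + Q_sP,\qquad R_i = Q_s^{\top}A_i - PR_s.$$ Then $Q = Q_s+Q_i\epsilon\in\mathbb{DR}^{m\times n}$ is a dual matrix with orthonormal columns ($Q^{\top}Q = I_n$), $R = R_s + R_i\epsilon\in\mathbb{DR}^{n\times n}$ is an upper triangular dual matrix, and $A = QR$. Moreover, in any such thin QR decomposition $A=QR$ with standard parts $Q_s,R_s$, the infinitesimal parts have the form $Q_i = (I_m - Q_sQ_s^{\top})A_iR_s^{-1} + Q_sP$, $R_i = Q_s^{\top}A_i - PR_s$ for some skew-symmetric $P\in\mathbb{R}^{n\times n}$.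
   Context: A dual number is $a = a_s + a_i\epsilon$ with $a_s,a_i\in\mathbb{R}$, where $\epsilon^2=0$, $\epsilon\neq 0$; $\mathbb{DR}^{m\times n}$ denotes the set of dual matrices $A = A_s + A_i\epsilon$ with $A_s, A_i\in\mathbb{R}^{m\times n}$. Products use $\epsilon^2=0$: $(A_s+A_i\epsilon)(B_s+B_i\epsilon) = A_sB_s + (A_sB_i + A_iB_s)\epsilon$. The transpose is $A^{\top}=A_s^{\top}+A_i^{\top}\epsilon$. A dual matrix $Q\in\mathbb{DR}^{m\times n}$ has orthonormal columns if $Q^{\top}Q=I_n$ (equivalently $Q_s^{\top}Q_s=I_n$ and $Q_s^{\top}Q_i+Q_i^{\top}Q_s=O_n$). A dual matrix is upper triangular if both parts are upper triangular. For a vector $v$, $v(a{:}b)$ is the subvector of entries $a$ through $b$. *)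

theory Defs
  imports "Jordan_Normal_Form.DL_Rank" "Jordan_Normal_Form.Gauss_Jordan_Elimination"
begin

text \<open>Dual real matrices A = A_s + A_i eps are represented as pairs (A_s, A_i).\<close>
type_synonym dmat = "real mat \<times> real mat"

definition dual_carrier :: "nat \<Rightarrow> nat \<Rightarrow> dmat set" where
  "dual_carrier m n = {A. fst A \<in> carrier_mat m n \<and> snd A \<in> carrier_mat m n}"

definition dmult :: "dmat \<Rightarrow> dmat \<Rightarrow> dmat" where
  "dmult A B = (fst A * fst B, fst A * snd B + snd A * fst B)"

definition dtranspose :: "dmat \<Rightarrow> dmat" where
  "dtranspose A = (transpose_mat (fst A), transpose_mat (snd A))"

definition dual_one :: "nat \<Rightarrow> dmat" where
  "dual_one n = (1\<^sub>m n, 0\<^sub>m n n)"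

definition dual_orthonormal_cols :: "nat \<Rightarrow> dmat \<Rightarrow> bool" where
  "dual_orthonormal_cols n Q = (dmult (dtranspose Q) Q = dual_one n)"

definition dual_upper_triangular :: "dmat \<Rightarrow> bool" where
  "dual_upper_triangular R = (upper_triangular (fst R) \<and> upper_triangular (snd R))"

text \<open>Strictly lower part of P (0-indexed): entry (i,k) for k < i, given by
  p_k(i) = (b_k(i) - sum_{t<k} r_{tk} p_t(i)) / r_{kk}.\<close>
function plow :: "real mat \<Rightarrow> real mat \<Rightarrow> nat \<Rightarrow> nat \<Rightarrow> real" where
  "plow B R i k = (if k < i then
      (B $$ (i,k) - (\<Sum>t\<in>{..<k}. R $$ (t,k) * plow B R i t)) / R $$ (k,k) else 0)"
  by auto
termination by (relation "measure (\<lambda>(B,R,i,k). k)") auto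

definition Pmat :: "nat \<Rightarrow> real mat \<Rightarrow> real mat \<Rightarrow> real mat" where
  "Pmat n B R = mat n n (\<lambda>(i,j). if j < i then plow B R i j
                                else if i < j then - plow B R j i else 0)"

end

theory Submission
  imports Defs
begin

declare plow.simps[simp del]

lemma inv_exists:
  fixes R :: "real mat"
  assumes R: "R \<in> carrier_mat n n" and ut: "upper_triangular R" and pos: "\<forall>i<n. R $$ (i,i) > 0"
  shows "\<exists>Ri. mat_inverse R = Some Ri \<and> R * Ri = 1\<^sub>m n \<and> Ri * R = 1\<^sub>m n \<and> Ri \<in> carrier_mat n n"
proof -
  have "det R = prod_list (diag_mat R)" using det_upper_triangular[OF ut R] .
  moreover have "0 \<notin> set (diag_mat R)" using R pos by (auto simp: diag_mat_def)
  ultimately have "det R \<noteq> 0" by (simp add: prod_list_zero_iff)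
  note U = det_non_zero_imp_unit[OF R this]
  show ?thesis
  proof (cases "mat_inverse R")
    case None
    have False using mat_inverse(1)[OF R None, of "()"] U[of "()"] by simp
    then show ?thesis ..
  next
    case (Some Ri)
    then show ?thesis using mat_inverse(2)[OF R Some] by blast
  qed
qed

lemma upper_part:
  fixes B R :: "real mat"
  assumes B: "B \<in> carrier_mat n n" and R: "R \<in> carrier_mat n n" and ut: "upper_triangular R"
    and pos: "\<forall>i<n. R $$ (i,i) > 0"
  shows "upper_triangular (B - Pmat n B R * R)"
  unfolding upper_triangular_def
proof (intro allI impI)
  fix i j assume i: "i < dim_row (B - Pmat n B R * R)" and ji: "j < i"
  have iN: "i < n" using i B by (simp add: Pmat_def)
  have jN: "j < n" using ji iN by simp
  let ?P = "Pmat n B R"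
  let ?f = "\<lambda>t. ?P $$ (i,t) * R $$ (t,j)"
  have "(?P * R) $$ (i,j) = (\<Sum>t\<in>{0..<n}. ?f t)"
    using iN jN R by (simp add: Pmat_def scalar_prod_def)
  also have "\<dots> = (\<Sum>t\<in>{0..<Suc j}. ?f t)"
  proof (rule sum.mono_neutral_right)
    show "finite {0..<n}" by simp
    show "{0..<Suc j} \<subseteq> {0..<n}" using jN by auto
    show "\<forall>t\<in>{0..<n} - {0..<Suc j}. ?f t = 0"
      using ut R by (auto simp: upper_triangular_def)
  qed
  also have "\<dots> = (\<Sum>t<j. R $$ (t,j) * plow B R i t) + R $$ (j,j) * plow B R i j"
  proof -
    have "(\<Sum>t\<in>{0..<Suc j}. ?f t) = (\<Sum>t<j. ?f t) + ?f j"
      by (simp add: atLeast0LessThan)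
    moreover have "(\<Sum>t<j. ?f t) = (\<Sum>t<j. R $$ (t,j) * plow B R i t)"
      using iN ji by (intro sum.cong) (auto simp: Pmat_def)
    moreover have "?f j = R $$ (j,j) * plow B R i j" using iN ji jN by (simp add: Pmat_def)
    ultimately show ?thesis by simp
  qed
  also have "\<dots> = B $$ (i,j)"
  proof -
    have "R $$ (j,j) > 0" using pos jN by simp
    moreover have "plow B R i j = (B $$ (i,j) - (\<Sum>t\<in>{..<j}. R $$ (t,j) * plow B R i t)) / R $$ (j,j)"
      by (subst plow.simps) (simp add: ji)
    ultimately show ?thesis by simp
  qed
  finally show "(B - ?P * R) $$ (i,j) = 0" using iN jN B R by (simp add: Pmat_def)
qed

theorem theorem3p2:
  fixes m n :: nat and A_s A_i Q_s R_s :: "real mat"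
  assumes "A_s \<in> carrier_mat m n" and "A_i \<in> carrier_mat m n" and "m \<ge> n"
    and "vec_space.rank m A_s = n"
    and "Q_s \<in> carrier_mat m n" and "R_s \<in> carrier_mat n n"
    and "transpose_mat Q_s * Q_s = 1\<^sub>m n"
    and "upper_triangular R_s" and "\<forall>i<n. R_s $$ (i,i) > 0"
    and "A_s = Q_s * R_s"
  shows "(let B = transpose_mat Q_s * A_i;
             P = Pmat n B R_s;
             Q_i = (1\<^sub>m m - Q_s * transpose_mat Q_s) * A_i * the (mat_inverse R_s) + Q_s * P;
             R_i = transpose_mat Q_s * A_i - P * R_s
         in (Q_s, Q_i) \<in> dual_carrier m n \<and> (R_s, R_i) \<in> dual_carrier n n
            \<and> dual_orthonormal_cols n (Q_s, Q_i)
            \<and> dual_upper_triangular (R_s, R_i)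
            \<and> (A_s, A_i) = dmult (Q_s, Q_i) (R_s, R_i))
         \<and> (\<forall>Q_i R_i. (Q_s, Q_i) \<in> dual_carrier m n \<and> (R_s, R_i) \<in> dual_carrier n n
            \<and> dual_orthonormal_cols n (Q_s, Q_i)
            \<and> dual_upper_triangular (R_s, R_i)
            \<and> (A_s, A_i) = dmult (Q_s, Q_i) (R_s, R_i)
          \<longrightarrow> (\<exists>P \<in> carrier_mat n n. transpose_mat P = - P
                \<and> Q_i = (1\<^sub>m m - Q_s * transpose_mat Q_s) * A_i * the (mat_inverse R_s) + Q_s * P
                \<and> R_i = transpose_mat Q_s * A_i - P * R_s))"
proof -
  note As = assms(1) and Ai = assms(2) and Qs = assms(5) and Rs = assms(6)
    and QQ = assms(7) and ut = assms(8) and pos = assms(9) and Aeq = assms(10)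
  obtain Rv where Rv: "mat_inverse R_s = Some Rv" "R_s * Rv = 1\<^sub>m n" "Rv * R_s = 1\<^sub>m n"
    "Rv \<in> carrier_mat n n" using inv_exists[OF Rs ut pos] by blast
  have theRv: "the (mat_inverse R_s) = Rv" using Rv by simp
  define T where "T = transpose_mat Q_s"
  have T: "T \<in> carrier_mat n m" using Qs T_def by simp
  define M where "M = 1\<^sub>m m - Q_s * T"
  have M: "M \<in> carrier_mat m m" using Qs T M_def by (auto intro!: minus_carrier_mat)
  have TM: "T * M = 0\<^sub>m n m"
  proof -
    have "T * M = T * 1\<^sub>m m - T * (Q_s * T)" unfolding M_def
      using T Qs by (intro mult_minus_distrib_mat) auto
    also have "T * (Q_s * T) = T" using T Qs QQ
      by (metis T_def assoc_mult_mat left_mult_one_mat)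
    finally show ?thesis using T by (intro eq_matI) auto
  qed
  have MQ: "M * Q_s = 0\<^sub>m m n"
  proof -
    have "M * Q_s = 1\<^sub>m m * Q_s - (Q_s * T) * Q_s" unfolding M_def
      using T Qs by (intro minus_mult_distrib_mat) auto
    also have "(Q_s * T) * Q_s = Q_s" using T Qs QQ
      by (metis T_def assoc_mult_mat right_mult_one_mat)
    finally show ?thesis using Qs by (intro eq_matI) auto
  qed
  have MX: "\<And>(X::real mat) k. X \<in> carrier_mat m k \<Longrightarrow> M * X = X - Q_s * (T * X)"
  proof -
    fix X :: "real mat" and k assume X: "X \<in> carrier_mat m k"
    have "M * X = 1\<^sub>m m * X - (Q_s * T) * X" unfolding M_def
      using T Qs X by (intro minus_mult_distrib_mat) auto
    then show "M * X = X - Q_s * (T * X)" using T Qs X by simp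
  qed
  show ?thesis
  proof (intro conjI allI impI)
    define B where "B = T * A_i"
    have B: "B \<in> carrier_mat n n" using T Ai B_def by simp
    define P where "P = Pmat n B R_s"
    have P: "P \<in> carrier_mat n n" unfolding P_def Pmat_def by simp
    have Pskew: "transpose_mat P = - P"
      unfolding P_def Pmat_def by (intro eq_matI) auto
    define X where "X = M * A_i * Rv"
    have X: "X \<in> carrier_mat m n" using M Ai Rv X_def by simp
    define Qi where "Qi = X + Q_s * P"
    have Qi: "Qi \<in> carrier_mat m n" using X Qs P Qi_def by simp
    define Ri where "Ri = B - P * R_s"
    have Ri: "Ri \<in> carrier_mat n n" using B P Rs Ri_def by (auto intro!: minus_carrier_mat)
    have TX: "T * X = 0\<^sub>m n n"
    proof -
      have "T * X = T * (M * (A_i * Rv))" using assoc_mult_mat[OF M Ai Rv(4)] X_def by simp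
      also have "\<dots> = (T * M) * (A_i * Rv)" using assoc_mult_mat[OF T M mult_carrier_mat[OF Ai Rv(4)]] by simp
      finally have "T * X = (T * M) * (A_i * Rv)" .
      then show ?thesis using TM Ai Rv by simp
    qed
    have TQi: "T * Qi = P"
    proof -
      have "T * Qi = T * X + T * (Q_s * P)" unfolding Qi_def using T X Qs P
        by (intro mult_add_distrib_mat) auto
      also have "T * (Q_s * P) = P" using T Qs P QQ T_def
        by (metis assoc_mult_mat left_mult_one_mat)
      finally show ?thesis using TX P by simp
    qed
    have QiTQ: "transpose_mat Qi * Q_s = - P"
    proof -
      have "transpose_mat Qi * Q_s = transpose_mat (T * Qi)" unfolding T_def
        using Qs Qi by (simp add: transpose_mult[of _ n m _ n])
      then show ?thesis using TQi Pskew by simp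
    qed
    have orth: "dual_orthonormal_cols n (Q_s, Qi)"
      unfolding dual_orthonormal_cols_def dmult_def dtranspose_def dual_one_def
      using QQ TQi QiTQ P T_def Qs Qi by (auto intro!: eq_matI)
    have utR: "dual_upper_triangular (R_s, Ri)"
      unfolding dual_upper_triangular_def Ri_def P_def
      using ut upper_part[OF B Rs ut pos] by simp
    have prod: "(A_s, A_i) = dmult (Q_s, Qi) (R_s, Ri)"
    proof -
      have "Q_s * Ri = Q_s * B - Q_s * (P * R_s)" unfolding Ri_def using Qs B P Rs
        by (intro mult_minus_distrib_mat) auto
      moreover have "Qi * R_s = X * R_s + Q_s * (P * R_s)" unfolding Qi_def using X Qs P Rs
        by (simp add: add_mult_distrib_mat)
      moreover have "X * R_s = M * A_i"
      proof -
        have "X * R_s = (M * A_i) * (Rv * R_s)" unfolding X_def using assoc_mult_mat[OF mult_carrier_mat[OF M Ai] Rv(4) Rs] by simp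
        then show ?thesis using Rv M Ai by simp
      qed
      moreover have "M * A_i = A_i - Q_s * B" using MX[OF Ai] B_def by simp
      ultimately have "Q_s * Ri + Qi * R_s = (Q_s * B - Q_s * (P * R_s)) + ((A_i - Q_s * B) + Q_s * (P * R_s))"
        by simp
      also have "\<dots> = A_i" using Qs B P Rs Ai by (intro eq_matI) auto
      finally show ?thesis unfolding dmult_def using Aeq by simp
    qed
    show "let B = transpose_mat Q_s * A_i; P = Pmat n B R_s;
          Q_i = (1\<^sub>m m - Q_s * transpose_mat Q_s) * A_i * the (mat_inverse R_s) + Q_s * P;
          R_i = transpose_mat Q_s * A_i - P * R_s
      in (Q_s, Q_i) \<in> dual_carrier m n \<and> (R_s, R_i) \<in> dual_carrier n n \<and>
         dual_orthonormal_cols n (Q_s, Q_i) \<and> dual_upper_triangular (R_s, R_i) \<and>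
         (A_s, A_i) = dmult (Q_s, Q_i) (R_s, R_i)"
      unfolding Let_def theRv
      unfolding T_def[symmetric]
      unfolding M_def[symmetric] B_def[symmetric]
      unfolding P_def[symmetric]
      unfolding X_def[symmetric]
      unfolding Qi_def[symmetric] Ri_def[symmetric]
      using orth utR prod Qi Ri Qs Rs by (simp add: dual_carrier_def)
  next
    fix Qi Ri
    assume H: "(Q_s, Qi) \<in> dual_carrier m n \<and> (R_s, Ri) \<in> dual_carrier n n \<and>
       dual_orthonormal_cols n (Q_s, Qi) \<and> dual_upper_triangular (R_s, Ri) \<and>
       (A_s, A_i) = dmult (Q_s, Qi) (R_s, Ri)"
    have Qi: "Qi \<in> carrier_mat m n" and Ri: "Ri \<in> carrier_mat n n"
      using H by (auto simp: dual_carrier_def)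
    have o: "T * Qi + transpose_mat Qi * Q_s = 0\<^sub>m n n"
      using H unfolding dual_orthonormal_cols_def dmult_def dtranspose_def dual_one_def T_def by simp
    have Aieq: "A_i = Q_s * Ri + Qi * R_s" using H unfolding dmult_def by simp
    define P where "P = T * Qi"
    have P: "P \<in> carrier_mat n n" using T Qi P_def by simp
    have "transpose_mat P = transpose_mat Qi * Q_s" unfolding P_def T_def
      using Qs Qi by (simp add: transpose_mult[of _ n m _ n])
    moreover have "transpose_mat Qi * Q_s = - P"
    proof (rule eq_matI)
      fix i j assume i: "i < dim_row (- P)" and j: "j < dim_col (- P)"
      have iN: "i < n" and jN: "j < n" using i j P by auto
      have "(T * Qi + transpose_mat Qi * Q_s) $$ (i,j) = 0" using o iN jN by simp
      then show "(transpose_mat Qi * Q_s) $$ (i,j) = (- P) $$ (i,j)"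
        using iN jN P Qi Qs T unfolding P_def by simp
    qed (use P Qi Qs in auto)
    ultimately have Pskew: "transpose_mat P = - P" by simp
    have TAi: "T * A_i = Ri + P * R_s"
    proof -
      have "T * A_i = T * (Q_s * Ri) + T * (Qi * R_s)" unfolding Aieq using T Qs Ri Qi Rs
        by (intro mult_add_distrib_mat) auto
      also have "T * (Q_s * Ri) = Ri" using T Qs Ri QQ T_def by (metis assoc_mult_mat left_mult_one_mat)
      also have "T * (Qi * R_s) = P * R_s" unfolding P_def using assoc_mult_mat[OF T Qi Rs] by simp
      finally show ?thesis .
    qed
    have R_eq: "Ri = T * A_i - P * R_s" unfolding TAi using Ri P Rs by (intro eq_matI) auto
    have "M * A_i = M * (Q_s * Ri) + M * (Qi * R_s)" unfolding Aieq using M Qs Ri Qi Rs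
        by (intro mult_add_distrib_mat) auto
    also have "M * (Q_s * Ri) = 0\<^sub>m m n"
    proof -
      have "M * (Q_s * Ri) = (M * Q_s) * Ri" using assoc_mult_mat[OF M Qs Ri] by simp
      then show ?thesis using MQ Ri by simp
    qed
    also have "M * (Qi * R_s) = (M * Qi) * R_s" using assoc_mult_mat[OF M Qi Rs] by simp
    finally have "M * A_i = 0\<^sub>m m n + (M * Qi) * R_s" .
    then have "M * A_i = (M * Qi) * R_s"
      by (simp only: left_add_zero_mat[OF mult_carrier_mat[OF mult_carrier_mat[OF M Qi] Rs]])
    then have "M * A_i * Rv = (M * Qi) * (R_s * Rv)" using assoc_mult_mat[OF mult_carrier_mat[OF M Qi] Rs Rv(4)] by simp
    then have "M * A_i * Rv = M * Qi" using Rv M Qi by simp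
    also have "\<dots> = Qi - Q_s * P" using MX[OF Qi] P_def by simp
    finally have "M * A_i * Rv + Q_s * P = (Qi - Q_s * P) + Q_s * P" by simp
    also have "\<dots> = Qi" using Qi Qs P by (intro eq_matI) auto
    finally have Q_eq: "Qi = M * A_i * Rv + Q_s * P" by simp
    show "\<exists>P\<in>carrier_mat n n. transpose_mat P = - P \<and>
          Qi = (1\<^sub>m m - Q_s * transpose_mat Q_s) * A_i * the (mat_inverse R_s) + Q_s * P \<and>
          Ri = transpose_mat Q_s * A_i - P * R_s"
      using P Pskew Q_eq R_eq unfolding theRv M_def T_def by blast
  qed
qed

end
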